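(* For every integer $n\geqslant 2$, $\mathbf{I}\mathbb{N}_{\infty}^n$ is an $E$-unitary inverse semigroup.
   Context: $\mathbb{N}=\{1,2,3,\ldots\}$ and $\mathbb{N}^n$ carries the Euclidean metric $d$. A partial isometry of $\mathbb{N}^n$ is an injective partial map $\alpha\colon\mathbb{N}^n\rightharpoonup\mathbb{N}^n$ with $d((\mathbf{x})\alpha,(\mathbf{y})\alpha)=d(\mathbf{x},\mathbf{y})$ for all $\mathbf{x},\mathbf{y}\in\operatorname{dom}\alpha$; it is cofinite if $\mathbb{N}^n\setminus\operatorname{dom}\alpha$ and $\mathbb{N}^n\setminus\operatorname{ran}\alpha$ are finite. $\mathbf{I}\mathbb{N}_{\infty}^n$ is the monoid of all partial cofinite isometries of $\mathbb{N}^n$ under composition of partial maps. An inverse semigroup $S$ is $E$-unitary if whenever $e$ is an idempotent, $s\in S$ and $e\preccurlyeq s$ (natural partial order: $a\preccurlyeq b$ iff $a=bf$ for some idempotent $f$), then $s$ is an idempotent. *)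

theory Defs
  imports Complex_Main
begin

definition Pts :: "nat \<Rightarrow> nat list set" where
  "Pts n = {xs. length xs = n \<and> (\<forall>x\<in>set xs. 1 \<le> x)}"

definition edist :: "nat list \<Rightarrow> nat list \<Rightarrow> real" where
  "edist xs ys = sqrt (\<Sum>i<length xs. (real (xs ! i) - real (ys ! i))^2)"

definition partial_isometry :: "nat \<Rightarrow> (nat list \<rightharpoonup> nat list) \<Rightarrow> bool" where
  "partial_isometry n \<alpha> \<longleftrightarrow>
     dom \<alpha> \<subseteq> Pts n \<and> ran \<alpha> \<subseteq> Pts n \<and> inj_on \<alpha> (dom \<alpha>) \<and>
     (\<forall>x\<in>dom \<alpha>. \<forall>y\<in>dom \<alpha>. edist (the (\<alpha> x)) (the (\<alpha> y)) = edist x y)"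

definition cofinite_pmap :: "nat \<Rightarrow> (nat list \<rightharpoonup> nat list) \<Rightarrow> bool" where
  "cofinite_pmap n \<alpha> \<longleftrightarrow> finite (Pts n - dom \<alpha>) \<and> finite (Pts n - ran \<alpha>)"

definition INinf :: "nat \<Rightarrow> (nat list \<rightharpoonup> nat list) set" where
  "INinf n = {\<alpha>. partial_isometry n \<alpha> \<and> cofinite_pmap n \<alpha>}"

text \<open>Composition written on the right as in the paper: (x)(\<alpha>\<beta>) = ((x)\<alpha>)\<beta>.\<close>
definition pcomp :: "('a \<rightharpoonup> 'a) \<Rightarrow> ('a \<rightharpoonup> 'a) \<Rightarrow> ('a \<rightharpoonup> 'a)" where
  "pcomp \<alpha> \<beta> = \<beta> \<circ>\<^sub>m \<alpha>"

definition semigroup_on :: "'s set \<Rightarrow> ('s \<Rightarrow> 's \<Rightarrow> 's) \<Rightarrow> bool" where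
  "semigroup_on S m \<longleftrightarrow> (\<forall>a\<in>S. \<forall>b\<in>S. m a b \<in> S) \<and>
     (\<forall>a\<in>S. \<forall>b\<in>S. \<forall>c\<in>S. m (m a b) c = m a (m b c))"

definition inverse_semigroup_on :: "'s set \<Rightarrow> ('s \<Rightarrow> 's \<Rightarrow> 's) \<Rightarrow> bool" where
  "inverse_semigroup_on S m \<longleftrightarrow> semigroup_on S m \<and>
     (\<forall>a\<in>S. \<exists>!b. b \<in> S \<and> m (m a b) a = a \<and> m (m b a) b = b)"

definition idempotent_in :: "'s set \<Rightarrow> ('s \<Rightarrow> 's \<Rightarrow> 's) \<Rightarrow> 's \<Rightarrow> bool" where
  "idempotent_in S m e \<longleftrightarrow> e \<in> S \<and> m e e = e"

definition nat_le :: "'s set \<Rightarrow> ('s \<Rightarrow> 's \<Rightarrow> 's) \<Rightarrow> 's \<Rightarrow> 's \<Rightarrow> bool" where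
  "nat_le S m a b \<longleftrightarrow> (\<exists>f. idempotent_in S m f \<and> a = m b f)"

definition E_unitary :: "'s set \<Rightarrow> ('s \<Rightarrow> 's \<Rightarrow> 's) \<Rightarrow> bool" where
  "E_unitary S m \<longleftrightarrow> (\<forall>e s. idempotent_in S m e \<and> s \<in> S \<and> nat_le S m e s
       \<longrightarrow> idempotent_in S m s)"

end

theory Submission
  imports Defs
begin

lemma sum_shift:
  fixes a :: "nat \<Rightarrow> real"
  assumes "j < n"
  shows "(\<Sum>i<n. (a i - c - (if i = j then 1 else 0))^2) = (\<Sum>i<n. (a i - c)^2) - 2*(a j - c) + 1"
proof -
  have "(\<Sum>i<n. (a i - c - (if i = j then 1 else 0))^2) =
        (\<Sum>i<n. (a i - c)^2 - (if i = j then 2*(a i - c) - 1 else 0))"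
    by (rule sum.cong) (auto simp: power2_eq_square algebra_simps)
  also have "\<dots> = (\<Sum>i<n. (a i - c)^2) - (\<Sum>i<n. (if i = j then 2*(a i - c) - 1 else 0))"
    by (simp add: sum_subtractf)
  also have "(\<Sum>i<n. (if i = j then 2*(a i - c) - 1 else 0)) = 2*(a j - c) - 1"
    using assms by (simp add: sum.delta)
  finally show ?thesis by simp
qed

lemma key:
  assumes p: "p \<in> Pts n" and q: "q \<in> Pts n" and F: "finite F"
    and eq: "\<forall>x\<in>Pts n - F. edist q x = edist p x"
  shows "p = q"
proof -
  have lp: "length p = n" and lq: "length q = n" using p q by (auto simp: Pts_def)
  have sq: "(\<Sum>i<n. (real (q!i) - real (x!i))^2) = (\<Sum>i<n. (real (p!i) - real (x!i))^2)"
    if "x \<in> Pts n - F" for x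
    using eq that lp lq by (auto simp: edist_def)
  have "finite (\<Union> (set ` F))" using F by auto
  then obtain N where N: "\<forall>y\<in>\<Union> (set ` F). y < N" using finite_nat_set_iff_bounded by blast
  define M where "M = Suc N"
  show ?thesis
  proof (rule nth_equalityI)
    show "length p = length q" using lp lq by simp
  next
    fix j assume "j < length p"
    hence j: "j < n" using lp by simp
    define x0 where "x0 = replicate n M"
    define x1 where "x1 = (replicate n M)[j := M + 1]"
    have "M \<in> set x0" using j by (simp add: x0_def)
    hence "x0 \<notin> F" using N M_def by fastforce
    moreover have "x0 \<in> Pts n" by (auto simp: Pts_def x0_def M_def)
    ultimately have e0: "(\<Sum>i<n. (real (q!i) - real M)^2) = (\<Sum>i<n. (real (p!i) - real M)^2)"
      using sq[of x0] by (simp add: x0_def)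
    have "M + 1 \<in> set x1" using j by (simp add: x1_def set_update_memI)
    hence "x1 \<notin> F" using N M_def by fastforce
    moreover have "x1 \<in> Pts n"
    proof -
      have "set x1 \<subseteq> insert (M+1) (set (replicate n M))"
        unfolding x1_def by (rule set_update_subset_insert)
      hence "\<forall>y\<in>set x1. 1 \<le> y" by (auto simp: M_def)
      thus ?thesis by (simp add: Pts_def x1_def)
    qed
    ultimately have e1: "(\<Sum>i<n. (real (q!i) - real (x1!i))^2) = (\<Sum>i<n. (real (p!i) - real (x1!i))^2)"
      using sq[of x1] by simp
    have x1n: "real (x1!i) = real M + (if i = j then 1 else 0)" if "i < n" for i
      using that j by (auto simp: x1_def nth_list_update)
    have r: "(\<Sum>i<n. (real (a!i) - real (x1!i))^2) = (\<Sum>i<n. (real (a!i) - real M)^2) - 2*(real (a!j) - real M) + 1" for a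
    proof -
      have "(\<Sum>i<n. (real (a!i) - real (x1!i))^2) = (\<Sum>i<n. (real (a!i) - real M - (if i = j then 1 else 0))^2)"
        by (rule sum.cong) (auto simp: x1n algebra_simps)
      also have "\<dots> = (\<Sum>i<n. (real (a!i) - real M)^2) - 2*(real (a!j) - real M) + 1"
        by (rule sum_shift[OF j])
      finally show ?thesis .
    qed
    from e1 have "(\<Sum>i<n. (real (q!i) - real M)^2) - 2*(real (q!j) - real M) + 1 = (\<Sum>i<n. (real (p!i) - real M)^2) - 2*(real (p!j) - real M) + 1"
      by (simp only: r)
    with e0 show "p ! j = q ! j" by simp
  qed
qed

lemma INinf_D:
  assumes "a \<in> INinf n"
  shows "dom a \<subseteq> Pts n" "ran a \<subseteq> Pts n" "inj_on a (dom a)"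
    "\<And>x y. x \<in> dom a \<Longrightarrow> y \<in> dom a \<Longrightarrow> edist (the (a x)) (the (a y)) = edist x y"
    "finite (Pts n - dom a)" "finite (Pts n - ran a)"
  using assms by (auto simp: INinf_def partial_isometry_def cofinite_pmap_def)

lemma inj_some: "inj_on a (dom a) \<Longrightarrow> a x = Some z \<Longrightarrow> a y = Some z \<Longrightarrow> x = y"
  by (metis domI inj_on_def)

lemma comp_closed:
  assumes a: "a \<in> INinf n" and b: "b \<in> INinf n"
  shows "pcomp a b \<in> INinf n"
proof -
  note A = INinf_D[OF a] and B = INinf_D[OF b]
  define c where "c = pcomp a b"
  have cx: "c x = (case a x of None \<Rightarrow> None | Some y \<Rightarrow> b y)" for x
    by (simp add: c_def pcomp_def map_comp_def)
  have d1: "dom c \<subseteq> Pts n" using A(1) by (auto simp: cx split: option.splits)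
  have r1: "ran c \<subseteq> Pts n" using B(2) by (auto simp: cx ran_def split: option.splits)
  have i1: "inj_on c (dom c)"
  proof (rule inj_onI)
    fix x y assume "x \<in> dom c" "y \<in> dom c" "c x = c y"
    then obtain u v w where "a x = Some u" "a y = Some v" "b u = Some w" "b v = Some w"
      by (auto simp: cx split: option.splits)
    thus "x = y" using inj_some[OF A(3)] inj_some[OF B(3)] by metis
  qed
  have is1: "edist (the (c x)) (the (c y)) = edist x y" if "x \<in> dom c" "y \<in> dom c" for x y
  proof -
    from that obtain u v w z where h: "a x = Some u" "a y = Some v" "b u = Some w" "b v = Some z"
      by (auto simp: cx split: option.splits)
    have dx: "x \<in> dom a" using h(1) by (rule domI)
    have dy: "y \<in> dom a" using h(2) by (rule domI)
    have du: "u \<in> dom b" using h(3) by (rule domI)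
    have dv: "v \<in> dom b" using h(4) by (rule domI)
    have e1: "edist u v = edist x y" using A(4)[OF dx dy] h(1,2) by simp
    have e2: "edist w z = edist u v" using B(4)[OF du dv] h(3,4) by simp
    have ed: "edist w z = edist x y" using e1 e2 by simp
    have "c x = Some w" "c y = Some z" using h by (simp_all add: cx)
    thus ?thesis using ed by simp
  qed
  have f1: "finite (Pts n - dom c)"
  proof -
    let ?S = "{x \<in> dom a. the (a x) \<in> Pts n - dom b}"
    have "inj_on (\<lambda>x. the (a x)) ?S"
    proof (rule inj_onI)
      fix x y assume hx: "x \<in> ?S" and hy: "y \<in> ?S" and e: "the (a x) = the (a y)"
      from hx obtain u where u: "a x = Some u" by blast
      from hy obtain v where v: "a y = Some v" by blast
      have "a y = Some u" using u v e by simp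
      thus "x = y" using inj_some[OF A(3) u] by blast
    qed
    moreover have "(\<lambda>x. the (a x)) ` ?S \<subseteq> Pts n - dom b" by blast
    hence "finite ((\<lambda>x. the (a x)) ` ?S)" using B(5) by (rule finite_subset)
    ultimately have "finite ?S" by (simp add: finite_image_iff)
    moreover have "Pts n - dom c \<subseteq> (Pts n - dom a) \<union> ?S"
    proof
      fix x assume x: "x \<in> Pts n - dom c"
      show "x \<in> (Pts n - dom a) \<union> ?S"
      proof (cases "a x")
        case None thus ?thesis using x by blast
      next
        case (Some u)
        have "c x = b u" using Some by (simp add: cx)
        hence "u \<notin> dom b" using x by (simp add: dom_def)
        moreover have "u \<in> Pts n" using A(2) Some by (blast intro: ranI)
        ultimately show ?thesis using Some by (simp add: domI)
      qed
    qed
    ultimately show ?thesis using A(5) by (meson finite_UnI finite_subset)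
  qed
  have f2: "finite (Pts n - ran c)"
  proof -
    have "Pts n - ran c \<subseteq> (Pts n - ran b) \<union> (\<lambda>z. the (b z)) ` (Pts n - ran a)"
    proof
      fix y assume y: "y \<in> Pts n - ran c"
      show "y \<in> (Pts n - ran b) \<union> (\<lambda>z. the (b z)) ` (Pts n - ran a)"
      proof (cases "y \<in> ran b")
        case True
        then obtain z where z: "b z = Some y" by (auto simp: ran_def)
        have "z \<in> Pts n" using z B(1) by auto
        moreover have "z \<notin> ran a"
        proof
          assume "z \<in> ran a"
          then obtain x where "a x = Some z" by (auto simp: ran_def)
          hence "c x = Some y" using z by (simp add: cx)
          thus False using y by (auto simp: ran_def)
        qed
        ultimately show ?thesis using z by force
      qed (use y in auto)
    qed
    thus ?thesis using A(6) B(6) by (meson finite_UnI finite_imageI finite_subset)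
  qed
  show ?thesis using d1 r1 i1 is1 f1 f2 unfolding c_def[symmetric]
    by (auto simp: INinf_def partial_isometry_def cofinite_pmap_def)
qed

definition pinv :: "('a \<rightharpoonup> 'a) \<Rightarrow> ('a \<rightharpoonup> 'a)" where
  "pinv a = (\<lambda>y. if y \<in> ran a then Some (SOME x. a x = Some y) else None)"

lemma pinv_some:
  assumes "inj_on a (dom a)"
  shows "pinv a y = Some x \<longleftrightarrow> a x = Some y"
proof
  assume h: "pinv a y = Some x"
  hence "y \<in> ran a" by (auto simp: pinv_def split: if_splits)
  then obtain z where "a z = Some y" by (auto simp: ran_def)
  hence "a (SOME x. a x = Some y) = Some y" by (rule someI)
  thus "a x = Some y" using h by (auto simp: pinv_def split: if_splits)
next
  assume h: "a x = Some y"
  hence "a (SOME x. a x = Some y) = Some y" by (rule someI)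
  hence "(SOME x. a x = Some y) = x" using h inj_some[OF assms] by blast
  thus "pinv a y = Some x" using h by (auto simp: pinv_def ran_def)
qed

lemma pinv_none: "pinv a y = None \<longleftrightarrow> y \<notin> ran a"
  by (simp add: pinv_def)

lemma pinv_closed:
  assumes a: "a \<in> INinf n"
  shows "pinv a \<in> INinf n"
proof -
  note A = INinf_D[OF a]
  note ps = pinv_some[OF A(3)]
  have dom: "dom (pinv a) = ran a" by (auto simp: pinv_def split: if_splits)
  have ran: "ran (pinv a) = dom a"
    by (auto simp: ran_def ps)
  have inj: "inj_on (pinv a) (dom (pinv a))"
    by (rule inj_onI) (metis domIff option.exhaust ps option.inject)
  have iso: "edist (the (pinv a x)) (the (pinv a y)) = edist x y"
    if hx: "x \<in> dom (pinv a)" and hy: "y \<in> dom (pinv a)" for x y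
  proof -
    obtain u v where "pinv a x = Some u" "pinv a y = Some v" using hx hy by (meson domD)
    hence h: "a u = Some x" "a v = Some y" using ps by auto
    have "u \<in> dom a" using h(1) by (rule domI)
    moreover have "v \<in> dom a" using h(2) by (rule domI)
    ultimately have "edist x y = edist u v" using A(4)[of u v] h by simp
    thus ?thesis using \<open>pinv a x = Some u\<close> \<open>pinv a y = Some v\<close> by simp
  qed
  show ?thesis using dom ran inj iso A
    by (auto simp: INinf_def partial_isometry_def cofinite_pmap_def)
qed

lemma comp_assoc: "pcomp (pcomp a b) c = pcomp a (pcomp b c)"
  by (rule ext) (auto simp: pcomp_def map_comp_def split: option.splits)

lemma pinv_eq1:
  assumes "inj_on a (dom a)"
  shows "pcomp (pcomp a (pinv a)) a = a"
proof (rule ext)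
  fix x show "pcomp (pcomp a (pinv a)) a x = a x"
    using pinv_some[OF assms] by (cases "a x") (auto simp: pcomp_def)
qed

lemma pinv_eq2:
  assumes "inj_on a (dom a)"
  shows "pcomp (pcomp (pinv a) a) (pinv a) = pinv a"
proof (rule ext)
  fix y show "pcomp (pcomp (pinv a) a) (pinv a) y = pinv a y"
    using pinv_some[OF assms] by (cases "pinv a y") (auto simp: pcomp_def)
qed

lemma pinv_unique:
  assumes ia: "inj_on a (dom a)" and ib: "inj_on b (dom b)"
    and e1: "pcomp (pcomp a b) a = a" and e2: "pcomp (pcomp b a) b = b"
  shows "b = pinv a"
proof (rule ext)
  fix y
  show "b y = pinv a y"
  proof (cases "b y")
    case None
    have "y \<notin> ran a"
    proof
      assume "y \<in> ran a"
      then obtain x where x: "a x = Some y" by (auto simp: ran_def)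
      have "pcomp (pcomp a b) a x = None" using x None by (simp add: pcomp_def)
      thus False using e1 x by simp
    qed
    thus ?thesis using None pinv_none by metis
  next
    case (Some z)
    have "pcomp (pcomp b a) b y = Some z" using e2 Some by simp
    then obtain w where w: "a z = Some w" "b w = Some z" using Some
      by (auto simp: pcomp_def map_comp_def split: option.splits)
    hence "w = y" using inj_some[OF ib] Some by metis
    thus ?thesis using w Some pinv_some[OF ia, of y z] by metis
  qed
qed

lemma idem_id:
  assumes "idempotent_in (INinf n) pcomp e" "e x = Some y"
  shows "y = x"
proof -
  have i: "inj_on e (dom e)" using assms INinf_D(3) by (auto simp: idempotent_in_def)
  have "pcomp e e x = e x" using assms by (simp add: idempotent_in_def)
  hence "e y = Some y" using assms(2) by (simp add: pcomp_def)
  thus ?thesis using inj_some[OF i] assms(2) by metis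
qed

theorem corollary4:
  fixes n :: nat
  assumes "n \<ge> 2"
  shows "inverse_semigroup_on (INinf n) pcomp \<and> E_unitary (INinf n) pcomp"
proof
  show "inverse_semigroup_on (INinf n) pcomp"
    unfolding inverse_semigroup_on_def semigroup_on_def
  proof (intro conjI ballI)
    fix a b assume "a \<in> INinf n" "b \<in> INinf n"
    thus "pcomp a b \<in> INinf n" by (rule comp_closed)
  next
    fix a b c :: "nat list \<rightharpoonup> nat list"
    show "pcomp (pcomp a b) c = pcomp a (pcomp b c)" by (rule comp_assoc)
  next
    fix a assume a: "a \<in> INinf n"
    note ia = INinf_D(3)[OF a]
    show "\<exists>!b. b \<in> INinf n \<and> pcomp (pcomp a b) a = a \<and> pcomp (pcomp b a) b = b"
    proof (rule ex1I[of _ "pinv a"])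
      show "pinv a \<in> INinf n \<and> pcomp (pcomp a (pinv a)) a = a \<and> pcomp (pcomp (pinv a) a) (pinv a) = pinv a"
        using pinv_closed[OF a] pinv_eq1[OF ia] pinv_eq2[OF ia] by simp
    next
      fix b assume "b \<in> INinf n \<and> pcomp (pcomp a b) a = a \<and> pcomp (pcomp b a) b = b"
      thus "b = pinv a" using pinv_unique[OF ia] INinf_D(3) by blast
    qed
  qed
next
  show "E_unitary (INinf n) pcomp"
    unfolding E_unitary_def
  proof (intro allI impI)
    fix e s assume h: "idempotent_in (INinf n) pcomp e \<and> s \<in> INinf n \<and> nat_le (INinf n) pcomp e s"
    hence eI: "idempotent_in (INinf n) pcomp e" and s: "s \<in> INinf n" by auto
    from h obtain f where f: "idempotent_in (INinf n) pcomp f" and ef: "e = pcomp s f"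
      by (auto simp: nat_le_def)
    have eINF: "e \<in> INinf n" using eI by (simp add: idempotent_in_def)
    note S = INinf_D[OF s] and E = INinf_D[OF eINF]
    have sfix: "s x = Some x" if "x \<in> dom e" for x
    proof -
      from that obtain y where y: "e x = Some y" by auto
      hence yx: "y = x" using idem_id[OF eI] by blast
      from y obtain z where z: "s x = Some z" "f z = Some y" using ef
        by (auto simp: pcomp_def map_comp_def split: option.splits)
      have "y = z" using idem_id[OF f z(2)] .
      thus ?thesis using z yx by simp
    qed
    have sid: "s p = Some p" if "p \<in> dom s" for p
    proof -
      from that obtain q where q: "s p = Some q" by auto
      have "p \<in> Pts n" using that S(1) by auto
      moreover have "q \<in> Pts n" using q S(2) by (auto simp: ran_def)
      moreover have "\<forall>x\<in>Pts n - (Pts n - dom e). edist q x = edist p x"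
      proof
        fix x assume "x \<in> Pts n - (Pts n - dom e)"
        hence x: "x \<in> dom e" by auto
        hence "s x = Some x" by (rule sfix)
        thus "edist q x = edist p x" using S(4)[of p x] q that by auto
      qed
      ultimately have "p = q" using key E(5) by blast
      thus ?thesis using q by simp
    qed
    have "pcomp s s = s"
    proof (rule ext)
      fix x show "pcomp s s x = s x"
        using sid[of x] by (cases "s x") (auto simp: pcomp_def)
    qed
    thus "idempotent_in (INinf n) pcomp s" using s by (simp add: idempotent_in_def)
  qed
qed

end
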